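(* Let $q$ be a prime power and let $n,k$ be integers with $3\le k\le\frac{n-2}{2}$, $n\le q$ and $k\le q-2$. Let $\alpha_1,\dots,\alpha_n\in\mathbb{F}_q$ be pairwise distinct and let $C_{k,k}$ be the linear code generated by the $k\times n$ matrix whose rows are $(\alpha_1^{e},\dots,\alpha_n^{e})$ for $e=0,1,\dots,k-2$ and $e=k$. If $C_{k,k}$ is an MDS code, then it is a non-GRS MDS code.
   Context: Convention: $0^0=1$. A linear code is MDS if its parameters $[n,k,d]$ satisfy $d=n-k+1$. For pairwise distinct $a_1,\dots,a_n\in\mathbb{F}_q$ and $w\in(\mathbb{F}_q^* )^n$, $GRS(n,k,\{a_i\},w)=\{(w_1f(a_1),\dots,w_nf(a_n)) : f\in\mathbb{F}_q[x],\ \deg f\le k-1\}$. Two codes are (monomially) equivalent if one is obtained from the other by permuting coordinates and scaling coordinates by nonzero scalars. A non-GRS MDS code is an MDS code not equivalent to any GRS code. *)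

theory Defs
  imports "HOL-Computational_Algebra.Polynomial" "HOL-Combinatorics.Permutations" "HOL-Library.Cardinality"
begin

text \<open>Words of length n over a finite field are modelled as functions nat => 'a
  that vanish outside the index set {..<n}. A code of length n is a set of such words.\<close>

definition is_word :: "nat \<Rightarrow> (nat \<Rightarrow> 'a::zero) \<Rightarrow> bool" where
  "is_word n w \<longleftrightarrow> (\<forall>j\<ge>n. w j = 0)"

definition linear_code :: "nat \<Rightarrow> (nat \<Rightarrow> 'a::field) set \<Rightarrow> bool" where
  "linear_code n C \<longleftrightarrow> (\<forall>w\<in>C. is_word n w) \<and> (\<lambda>_. 0) \<in> C \<and>
     (\<forall>u\<in>C. \<forall>v\<in>C. (\<lambda>j. u j + v j) \<in> C) \<and> (\<forall>c. \<forall>u\<in>C. (\<lambda>j. c * u j) \<in> C)"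

definition weight :: "nat \<Rightarrow> (nat \<Rightarrow> 'a::zero) \<Rightarrow> nat" where
  "weight n w = card {j. j < n \<and> w j \<noteq> 0}"

definition min_dist :: "nat \<Rightarrow> (nat \<Rightarrow> 'a::zero) set \<Rightarrow> nat" where
  "min_dist n C = Min (weight n ` (C - {\<lambda>_. 0}))"

definition code_dim :: "(nat \<Rightarrow> 'a::{finite,field}) set \<Rightarrow> nat \<Rightarrow> bool" where
  "code_dim C k \<longleftrightarrow> card C = CARD('a) ^ k"

definition MDS :: "nat \<Rightarrow> (nat \<Rightarrow> 'a::{finite,field}) set \<Rightarrow> bool" where
  "MDS n C \<longleftrightarrow> linear_code n C \<and> (\<exists>k. code_dim C k \<and> min_dist n C = n - k + 1)"

definition GRS :: "nat \<Rightarrow> nat \<Rightarrow> (nat \<Rightarrow> 'a::field) \<Rightarrow> (nat \<Rightarrow> 'a) \<Rightarrow> (nat \<Rightarrow> 'a) set" where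
  "GRS n k a w = {(\<lambda>j. if j < n then w j * poly f (a j) else 0) | f. degree f \<le> k - 1}"

definition is_GRS_code :: "nat \<Rightarrow> (nat \<Rightarrow> 'a::field) set \<Rightarrow> bool" where
  "is_GRS_code n D \<longleftrightarrow> (\<exists>k a w. 1 \<le> k \<and> inj_on a {..<n} \<and> (\<forall>j<n. w j \<noteq> 0) \<and> D = GRS n k a w)"

definition mono_image :: "nat \<Rightarrow> (nat \<Rightarrow> 'a::field) set \<Rightarrow> (nat \<Rightarrow> 'a) set \<Rightarrow> bool" where
  "mono_image n C D \<longleftrightarrow> (\<exists>\<sigma> s. \<sigma> permutes {..<n} \<and> (\<forall>j<n. s j \<noteq> 0) \<and>
      D = (\<lambda>c j. if j < n then s j * c (\<sigma> j) else 0) ` C)"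

definition code_equiv :: "nat \<Rightarrow> (nat \<Rightarrow> 'a::field) set \<Rightarrow> (nat \<Rightarrow> 'a) set \<Rightarrow> bool" where
  "code_equiv n C D \<longleftrightarrow> mono_image n C D \<or> mono_image n D C"

definition non_GRS_MDS :: "nat \<Rightarrow> (nat \<Rightarrow> 'a::{finite,field}) set \<Rightarrow> bool" where
  "non_GRS_MDS n C \<longleftrightarrow> MDS n C \<and> \<not> (\<exists>D. is_GRS_code n D \<and> code_equiv n C D)"

definition gen_code_exps :: "nat \<Rightarrow> (nat \<Rightarrow> 'a::field) \<Rightarrow> nat set \<Rightarrow> (nat \<Rightarrow> 'a) set" where
  "gen_code_exps n \<alpha> E = {(\<lambda>j. if j < n then (\<Sum>e\<in>E. c e * \<alpha> j ^ e) else 0) | c. True}"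

definition C_kk :: "nat \<Rightarrow> nat \<Rightarrow> (nat \<Rightarrow> 'a::field) \<Rightarrow> (nat \<Rightarrow> 'a) set" where
  "C_kk n k \<alpha> = gen_code_exps n \<alpha> ({0..k-2} \<union> {k})"

end

theory Submission
  imports Defs
begin

lemma vanish:
  fixes \<beta> :: "nat \<Rightarrow> 'a::field"
  assumes fin: "finite E" and lt: "\<forall>e\<in>E. e < n" and inj: "inj_on \<beta> {..<n}"
    and z: "\<forall>i<n. (\<Sum>e\<in>E. c e * \<beta> i ^ e) = 0"
  shows "\<forall>e\<in>E. c e = 0"
proof -
  define P where "P = (\<Sum>e\<in>E. monom (c e) e)"
  have ev: "poly P x = (\<Sum>e\<in>E. c e * x ^ e)" for x
    by (simp add: P_def poly_sum poly_monom)
  have P0: "P = 0"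
  proof (rule ccontr)
    assume nz: "P \<noteq> 0"
    have dP: "degree P < n"
    proof (cases "n = 0")
      case True
      then show ?thesis using inj z lt fin nz
        by (simp add: P_def)
    next
      case False
      have "degree P \<le> n - 1" unfolding P_def
      proof (rule degree_sum_le[OF fin])
        fix p assume "p \<in> E"
        hence "p < n" using lt by auto
        moreover have "degree (monom (c p) p) \<le> p" by (rule degree_monom_le)
        ultimately show "degree (monom (c p) p) \<le> n - 1" by linarith
      qed
      then show ?thesis using False by linarith
    qed
    have sub: "\<beta> ` {..<n} \<subseteq> {x. poly P x = 0}" using z ev by auto
    have "n = card (\<beta> ` {..<n})" using inj by (simp add: card_image)
    also have "\<dots> \<le> card {x. poly P x = 0}"
      by (rule card_mono[OF poly_roots_finite[OF nz] sub])
    also have "\<dots> \<le> degree P" by (rule card_poly_roots_bound[OF nz])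
    finally show False using dP by linarith
  qed
  show ?thesis
  proof
    fix e assume e: "e \<in> E"
    have "coeff P e = (\<Sum>e'\<in>E. if e' = e then c e' else 0)"
      by (simp add: P_def coeff_sum coeff_monom)
    also have "\<dots> = c e" using fin e by (simp add: sum.delta)
    finally show "c e = 0" using P0 by simp
  qed
qed

lemma card_field_ge2: "2 \<le> CARD('a::{finite,field})"
proof -
  have "card {0::'a, 1} = 2" by simp
  moreover have "card {0::'a, 1} \<le> CARD('a)" by (rule card_mono) auto
  ultimately show ?thesis by simp
qed

lemma card_deg_le:
  "card {p::'a::{finite,field} poly. degree p \<le> m} \<le> CARD('a) ^ (m+1)"
    "finite {p::'a::{finite,field} poly. degree p \<le> m}"
proof -
  let ?P = "{p::'a poly. degree p \<le> m}"
  let ?f = "\<lambda>p::'a poly. restrict (coeff p) {..m}"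
  have inj: "inj_on ?f ?P"
  proof (rule inj_onI)
    fix p q assume p: "p \<in> ?P" and q: "q \<in> ?P" and eq: "?f p = ?f q"
    show "p = q"
    proof (rule poly_eqI)
      fix i show "coeff p i = coeff q i"
      proof (cases "i \<le> m")
        case True then show ?thesis using fun_cong[OF eq, of i] by simp
      next
        case False then show ?thesis using p q by (simp add: coeff_eq_0)
      qed
    qed
  qed
  have sub: "?f ` ?P \<subseteq> PiE {..m} (\<lambda>_. UNIV)" 
  proof
    fix x assume "x \<in> ?f ` ?P"
    then obtain p where "x = ?f p" by blast
    thus "x \<in> PiE {..m} (\<lambda>_. UNIV)" by (simp add: restrict_PiE_iff)
  qed
  have fin: "finite (PiE {..m} (\<lambda>_. UNIV :: 'a set))" by (simp add: finite_PiE)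
  have cPi: "card (PiE {..m} (\<lambda>_. UNIV :: 'a set)) = CARD('a) ^ (m+1)"
    by (simp add: card_PiE)
  show "card ?P \<le> CARD('a) ^ (m+1)" using card_inj_on_le[OF inj sub fin] cPi by simp
  show "finite ?P" using inj_on_finite[OF inj sub fin] .
qed

lemma pigeon:
  fixes h :: "nat \<Rightarrow> 'a::{finite,field} poly"
  assumes fin: "finite E" and cE: "m + 1 < card E" and dh: "\<forall>e\<in>E. degree (h e) \<le> m"
  shows "\<exists>c. (\<exists>e\<in>E. c e \<noteq> 0) \<and> (\<Sum>e\<in>E. smult (c e) (h e)) = 0"
proof -
  define F where "F = (\<lambda>c. \<Sum>e\<in>E. smult (c e) (h e))"
  define A where "A = PiE E (\<lambda>_. UNIV :: 'a set)"
  have cA: "card A = CARD('a) ^ card E" by (simp add: A_def card_PiE fin)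
  have sub: "F ` A \<subseteq> {p. degree p \<le> m}"
    unfolding F_def using dh fin
    by (auto intro!: degree_sum_le intro: order.trans[OF degree_smult_le])
  have "card (F ` A) \<le> CARD('a) ^ (m+1)"
    using card_mono[OF card_deg_le(2) sub] card_deg_le(1)[of m, where 'a='a] by linarith
  also have "\<dots> < CARD('a) ^ card E"
    using card_field_ge2[where 'a='a] cE by (intro power_strict_increasing) auto
  finally have "card (F ` A) < card A" using cA by simp
  hence "\<not> inj_on F A" using card_image by fastforce
  then obtain c c' where c: "c \<in> A" "c' \<in> A" "c \<noteq> c'" "F c = F c'"
    unfolding inj_on_def by blast
  have "\<exists>e\<in>E. c e \<noteq> c' e"
  proof (rule ccontr)
    assume "\<not> ?thesis"
    hence "c = c'" using c(1,2) unfolding A_def by (auto simp: PiE_def extensional_def fun_eq_iff)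
    thus False using c(3) by simp
  qed
  moreover have "(\<Sum>e\<in>E. smult (c e - c' e) (h e)) = 0"
    using c(4) by (simp add: F_def smult_diff_left sum_subtractf)
  ultimately show ?thesis by (intro exI[of _ "\<lambda>e. c e - c' e"]) auto
qed

lemma final:
  fixes \<beta> :: "nat \<Rightarrow> 'a::{finite,field}"
  assumes k3: "3 \<le> k" and kn: "2 * k < n" and inj: "inj_on \<beta> {..<n}"
    and g0: "\<forall>j<n. g j \<noteq> 0"
    and hyp: "\<forall>e1\<in>{0..k-2} \<union> {k}. \<exists>f. degree f \<le> k - 1 \<and>
                 (\<forall>j<n. g j * \<beta> j ^ e1 = r j * poly f (b j))"
  shows False
proof -
  define E2 where "E2 = {0..2*k-2} \<union> {2*k}"
  have fE2: "finite E2" by (simp add: E2_def)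
  have cE2: "card E2 = 2 * k" using k3 by (simp add: E2_def)
  have ex: "\<exists>h. degree h \<le> 2*k-2 \<and> (\<forall>j<n. g j ^ 2 * \<beta> j ^ e = r j ^ 2 * poly h (b j))"
    if e: "e \<in> E2" for e
  proof -
    obtain e1 e2 where ee: "e1 \<in> {0..k-2} \<union> {k}" "e2 \<in> {0..k-2} \<union> {k}" "e = e1 + e2"
    proof (cases "e \<le> 2*k-4")
      case True
      show ?thesis by (rule that[of "min e (k-2)" "e - min e (k-2)"]) (use True k3 in auto)
    next
      case False
      hence "e - k \<in> {0..k-2} \<union> {k}" "e = (e - k) + k" using e k3 unfolding E2_def by auto
      then show ?thesis by (intro that[of "e - k" k]) auto
    qed
    obtain f1 where f1: "degree f1 \<le> k - 1" "\<forall>j<n. g j * \<beta> j ^ e1 = r j * poly f1 (b j)"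
      using hyp ee(1) by blast
    obtain f2 where f2: "degree f2 \<le> k - 1" "\<forall>j<n. g j * \<beta> j ^ e2 = r j * poly f2 (b j)"
      using hyp ee(2) by blast
    have "degree (f1 * f2) \<le> 2*k-2"
      using degree_mult_le[of f1 f2] f1(1) f2(1) k3 by linarith
    moreover have "\<forall>j<n. g j ^ 2 * \<beta> j ^ e = r j ^ 2 * poly (f1 * f2) (b j)"
    proof (intro allI impI)
      fix j assume j: "j < n"
      have "g j ^ 2 * \<beta> j ^ e = (g j * \<beta> j ^ e1) * (g j * \<beta> j ^ e2)"
        by (simp add: ee(3) power2_eq_square power_add algebra_simps)
      also have "\<dots> = (r j * poly f1 (b j)) * (r j * poly f2 (b j))" using f1(2) f2(2) j by simp
      also have "\<dots> = r j ^ 2 * poly (f1 * f2) (b j)" by (simp add: power2_eq_square algebra_simps)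
      finally show "g j ^ 2 * \<beta> j ^ e = r j ^ 2 * poly (f1 * f2) (b j)" .
    qed
    ultimately show ?thesis by blast
  qed
  then obtain H where H: "\<forall>e\<in>E2. degree (H e) \<le> 2*k-2 \<and>
      (\<forall>j<n. g j ^ 2 * \<beta> j ^ e = r j ^ 2 * poly (H e) (b j))"
    by metis
  have "\<exists>c. (\<exists>e\<in>E2. c e \<noteq> 0) \<and> (\<Sum>e\<in>E2. smult (c e) (H e)) = 0"
    by (rule pigeon[OF fE2]) (use cE2 k3 H in auto)
  then obtain c where c: "\<exists>e\<in>E2. c e \<noteq> 0" "(\<Sum>e\<in>E2. smult (c e) (H e)) = 0" by blast
  have "\<forall>i<n. (\<Sum>e\<in>E2. c e * \<beta> i ^ e) = 0"
  proof (intro allI impI)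
    fix j assume j: "j < n"
    have "g j ^ 2 * (\<Sum>e\<in>E2. c e * \<beta> j ^ e) = (\<Sum>e\<in>E2. c e * (g j ^ 2 * \<beta> j ^ e))"
      by (simp add: sum_distrib_left algebra_simps)
    also have "\<dots> = (\<Sum>e\<in>E2. c e * (r j ^ 2 * poly (H e) (b j)))"
      using H j by (intro sum.cong) auto
    also have "\<dots> = r j ^ 2 * poly (\<Sum>e\<in>E2. smult (c e) (H e)) (b j)"
      by (simp add: poly_sum sum_distrib_left algebra_simps)
    also have "\<dots> = 0" using c(2) by simp
    finally show "(\<Sum>e\<in>E2. c e * \<beta> j ^ e) = 0" using g0 j by simp
  qed
  hence "\<forall>e\<in>E2. c e = 0"
    by (intro vanish[OF fE2 _ inj]) (use kn in \<open>auto simp: E2_def\<close>)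
  thus False using c(1) by blast
qed

lemma word_in_C:
  assumes "e1 \<in> {0..k-2} \<union> {k}"
  shows "(\<lambda>j. if j < n then \<alpha> j ^ e1 else 0) \<in> C_kk n k (\<alpha> :: nat \<Rightarrow> 'a::field)"
proof -
  have "(\<Sum>e\<in>{0..k-2} \<union> {k}. (if e = e1 then 1 else 0) * \<alpha> j ^ e) = \<alpha> j ^ e1" for j
  proof -
    have "(\<Sum>e\<in>{0..k-2} \<union> {k}. (if e = e1 then 1 else 0) * \<alpha> j ^ e)
        = (\<Sum>e\<in>{0..k-2} \<union> {k}. if e = e1 then \<alpha> j ^ e else 0)"
      by (intro sum.cong) auto
    also have "\<dots> = \<alpha> j ^ e1" using assms by (simp only: sum.delta finite_Un finite_atLeastAtMost finite.emptyI finite_insert if_True)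
    finally show ?thesis .
  qed
  then show ?thesis unfolding C_kk_def gen_code_exps_def
    by (intro CollectI exI[of _ "\<lambda>e. if e = e1 then 1 else 0"]) auto
qed

lemma card_C:
  assumes k2: "2 \<le> k"
  shows "card (C_kk n k (\<alpha> :: nat \<Rightarrow> 'a::{finite,field})) \<le> CARD('a) ^ k"
    "finite (C_kk n k \<alpha>)"
proof -
  define E where "E = {0..k-2} \<union> {k}"
  define G where "G = (\<lambda>c. (\<lambda>j. if j < n then (\<Sum>e\<in>E. c e * \<alpha> j ^ e) else (0::'a)))"
  have cE: "card E = k" using k2 by (simp add: E_def)
  have eq: "C_kk n k \<alpha> = G ` PiE E (\<lambda>_. UNIV)"
  proof
    show "C_kk n k \<alpha> \<subseteq> G ` PiE E (\<lambda>_. UNIV)"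
    proof
      fix x assume "x \<in> C_kk n k \<alpha>"
      then obtain c where x: "x = G c" unfolding C_kk_def gen_code_exps_def G_def E_def by blast
      have "G c = G (restrict c E)" unfolding G_def
      proof (intro ext)
        fix j
        have "(\<Sum>e\<in>E. c e * \<alpha> j ^ e) = (\<Sum>e\<in>E. restrict c E e * \<alpha> j ^ e)"
          by (rule sum.cong) simp_all
        then show "(if j < n then \<Sum>e\<in>E. c e * \<alpha> j ^ e else 0) =
          (if j < n then \<Sum>e\<in>E. restrict c E e * \<alpha> j ^ e else 0)" by simp
      qed
      moreover have "restrict c E \<in> PiE E (\<lambda>_. UNIV)" by simp
      ultimately show "x \<in> G ` PiE E (\<lambda>_. UNIV)" using x by blast
    qed
  next
    show "G ` PiE E (\<lambda>_. UNIV) \<subseteq> C_kk n k \<alpha>"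
      unfolding C_kk_def gen_code_exps_def G_def E_def by blast
  qed
  have "card (C_kk n k \<alpha>) \<le> card (PiE E (\<lambda>_. UNIV :: 'a set))"
    unfolding eq by (rule card_image_le) (simp add: finite_PiE E_def)
  also have "\<dots> = CARD('a) ^ k" using cE by (simp add: card_PiE E_def)
  finally show "card (C_kk n k \<alpha>) \<le> CARD('a) ^ k" .
  show "finite (C_kk n k \<alpha>)" unfolding eq by (simp add: finite_PiE E_def)
qed

lemma GRS_finite: "finite (GRS n k' a (w :: nat \<Rightarrow> 'a::{finite,field}))"
proof -
  have "GRS n k' a w = (\<lambda>f. (\<lambda>j. if j < n then w j * poly f (a j) else 0)) ` {f. degree f \<le> k' - 1}"
    unfolding GRS_def by blast
  then show ?thesis using finite_imageI[OF card_deg_le(2)] by simp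
qed

lemma GRS_big:
  assumes kk: "k + 1 \<le> k'" and kn: "k + 1 \<le> n" and inj: "inj_on a {..<n}"
    and w0: "\<forall>j<n. w j \<noteq> 0"
  shows "CARD('a) ^ (k+1) \<le> card (GRS n k' a (w :: nat \<Rightarrow> 'a::{finite,field}))"
proof -
  define H where "H = (\<lambda>c. (\<lambda>j. if j < n then w j * poly (\<Sum>i\<le>k. monom (c i) i) (a j) else (0::'a)))"
  have sub: "H ` PiE {..k} (\<lambda>_. UNIV) \<subseteq> GRS n k' a w"
  proof
    fix x assume "x \<in> H ` PiE {..k} (\<lambda>_. UNIV)"
    then obtain c where x: "x = H c" by blast
    have "degree (\<Sum>i\<le>k. monom (c i) i) \<le> k'-1"
    proof (rule degree_sum_le)
      fix p assume "p \<in> {..k}"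
      hence "p \<le> k'-1" using kk by simp
      moreover have "degree (monom (c p) p) \<le> p" by (rule degree_monom_le)
      ultimately show "degree (monom (c p) p) \<le> k'-1" by linarith
    qed simp
    then show "x \<in> GRS n k' a w" unfolding GRS_def x H_def
      by (intro CollectI exI[of _ "\<Sum>i\<le>k. monom (c i) i"] conjI refl)
  qed
  have inj2: "inj_on H (PiE {..k} (\<lambda>_. UNIV))"
  proof (rule inj_onI)
    fix c c' assume c: "c \<in> PiE {..k} (\<lambda>_. UNIV)" and c': "c' \<in> PiE {..k} (\<lambda>_. UNIV)"
      and eq: "H c = H c'"
    have "\<forall>i<n. (\<Sum>e\<in>{..k}. (c e - c' e) * a i ^ e) = 0"
    proof (intro allI impI)
      fix i assume i: "i < n"
      have "w i * poly (\<Sum>j\<le>k. monom (c j) j) (a i) = w i * poly (\<Sum>j\<le>k. monom (c' j) j) (a i)"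
        using fun_cong[OF eq, of i] i by (simp add: H_def)
      hence "poly (\<Sum>j\<le>k. monom (c j) j) (a i) = poly (\<Sum>j\<le>k. monom (c' j) j) (a i)"
        using w0 i by simp
      thus "(\<Sum>e\<in>{..k}. (c e - c' e) * a i ^ e) = 0"
        by (simp add: poly_sum poly_monom left_diff_distrib sum_subtractf)
    qed
    moreover have lt: "\<forall>e\<in>{..k}. e < n" using kn by auto
    ultimately have "\<forall>e\<in>{..k}. c e - c' e = 0"
      using vanish[OF finite_atMost lt inj, of "\<lambda>e. c e - c' e"] by simp
    show "c = c'"
    proof
      fix x show "c x = c' x"
      proof (cases "x \<le> k")
        case True then show ?thesis using \<open>\<forall>e\<in>{..k}. c e - c' e = 0\<close> by simp
      next
        case False then show ?thesis using PiE_arb[OF c, of x] PiE_arb[OF c', of x] by simp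
      qed
    qed
  qed
  have "CARD('a) ^ (k+1) = card (PiE {..k} (\<lambda>_. UNIV :: 'a set))" by (simp add: card_PiE)
  also have "\<dots> \<le> card (GRS n k' a w)"
    by (rule card_inj_on_le[OF inj2 sub GRS_finite])
  finally show ?thesis .
qed

theorem proposition4p3:
  fixes \<alpha> :: "nat \<Rightarrow> 'a::{finite,field}" and n k :: nat
  assumes "3 \<le> k" and "2 * k \<le> n - 2" and "n \<le> CARD('a)" and "k \<le> CARD('a) - 2"
    and "inj_on \<alpha> {..<n}"
    and "MDS n (C_kk n k \<alpha>)"
  shows "non_GRS_MDS n (C_kk n k \<alpha>)"
proof -
  note k3 = assms(1)
  have kn: "2 * k + 2 \<le> n" using assms(1,2) by linarith
  let ?C = "C_kk n k \<alpha>"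
  let ?E = "{0..k-2} \<union> {k}"
  have cC: "card ?C \<le> CARD('a) ^ k" "finite ?C" using card_C[of k n \<alpha>] k3 by auto
  have Cw: "\<forall>u\<in>?C. \<forall>j\<ge>n. u j = 0" unfolding C_kk_def gen_code_exps_def by auto
  have qpow: "CARD('a) ^ k < CARD('a) ^ (k+1)"
    using card_field_ge2[where 'a='a] by (intro power_strict_increasing) auto
  have False if D: "is_GRS_code n D" and eqv: "code_equiv n ?C D" for D
  proof -
    obtain k' a w where kw: "1 \<le> k'" "inj_on a {..<n}" "\<forall>j<n. w j \<noteq> 0" "D = GRS n k' a w"
      using D unfolding is_GRS_code_def by blast
    have Dw: "\<forall>u\<in>D. \<forall>j\<ge>n. u j = 0" unfolding kw(4) GRS_def by auto
    have cD: "k' \<le> k" if "card D \<le> card ?C"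
    proof (rule ccontr)
      assume "\<not> k' \<le> k"
      hence "CARD('a) ^ (k+1) \<le> card D" using GRS_big[of k k' n a w] kw kn by auto
      thus False using that cC qpow by linarith
    qed
    from eqv show False unfolding code_equiv_def mono_image_def
    proof (elim disjE exE conjE)
      fix \<sigma> s assume \<sigma>: "\<sigma> permutes {..<n}" and s: "\<forall>j<n. s j \<noteq> 0"
        and DM: "D = (\<lambda>c j. if j < n then s j * c (\<sigma> j) else 0) ` ?C"
      have "card D \<le> card ?C" unfolding DM by (rule card_image_le[OF cC(2)])
      hence kk: "k' \<le> k" by (rule cD)
      have \<sigma>n: "\<sigma> j < n" if "j < n" for j using permutes_in_image[OF \<sigma>] that by simp
      have injb: "inj_on (\<alpha> \<circ> \<sigma>) {..<n}"
        using comp_inj_on[OF permutes_inj_on[OF \<sigma>]] assms(5) permutes_image[OF \<sigma>] by metis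
      show False
      proof (rule final[OF k3 _ injb s])
        show "2 * k < n" using kn by linarith
        show "\<forall>e1\<in>?E. \<exists>f. degree f \<le> k - 1 \<and> (\<forall>j<n. s j * (\<alpha> \<circ> \<sigma>) j ^ e1 = w j * poly f (a j))"
        proof
          fix e1 assume e1: "e1 \<in> ?E"
          have "(\<lambda>j. if j < n then s j * (\<lambda>j. if j < n then \<alpha> j ^ e1 else 0) (\<sigma> j) else 0) \<in> D"
            unfolding DM by (rule image_eqI[OF _ word_in_C[OF e1]]) simp
          then obtain f where f: "degree f \<le> k' - 1"
            "(\<lambda>j. if j < n then s j * (\<lambda>j. if j < n then \<alpha> j ^ e1 else 0) (\<sigma> j) else 0)
              = (\<lambda>j. if j < n then w j * poly f (a j) else 0)"
            unfolding kw(4) GRS_def by blast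
          have "\<forall>j<n. s j * (\<alpha> \<circ> \<sigma>) j ^ e1 = w j * poly f (a j)"
          proof (intro allI impI)
            fix j assume j: "j < n"
            show "s j * (\<alpha> \<circ> \<sigma>) j ^ e1 = w j * poly f (a j)"
              using fun_cong[OF f(2), of j] j \<sigma>n[OF j] by simp
          qed
          moreover have "degree f \<le> k - 1" using f(1) kk by linarith
          ultimately show "\<exists>f. degree f \<le> k - 1 \<and> (\<forall>j<n. s j * (\<alpha> \<circ> \<sigma>) j ^ e1 = w j * poly f (a j))"
            by blast
        qed
      qed
    next
      fix \<sigma> s assume \<sigma>: "\<sigma> permutes {..<n}" and s: "\<forall>j<n. s j \<noteq> 0"
        and CM: "?C = (\<lambda>c j. if j < n then s j * c (\<sigma> j) else 0) ` D"
      let ?M = "(\<lambda>c j. if j < n then s j * c (\<sigma> j) else 0)"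
      have injM: "inj_on ?M D"
      proof (rule inj_onI)
        fix u v assume u: "u \<in> D" and v: "v \<in> D" and eq: "?M u = ?M v"
        show "u = v"
        proof
          fix i show "u i = v i"
          proof (cases "i < n")
            case True
            then obtain j where j: "j < n" "\<sigma> j = i"
              using permutes_image[OF \<sigma>] by (metis imageE lessThan_iff)
            have "s j * u (\<sigma> j) = s j * v (\<sigma> j)" using fun_cong[OF eq, of j] j by simp
            then show ?thesis using s j by simp
          next
            case False
            hence "n \<le> i" by simp
            then show ?thesis using u v Dw by metis
          qed
        qed
      qed
      have "card D \<le> card ?C" unfolding CM using card_image[OF injM] by simp
      hence kk: "k' \<le> k" by (rule cD)
      have \<sigma>n: "\<sigma> j < n" if "j < n" for j using permutes_in_image[OF \<sigma>] that by simp
      have one: "\<forall>j<n. (1::'a) \<noteq> 0" by simp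
      show False
      proof (rule final[OF k3 _ assms(5) one])
        show "2 * k < n" using kn by linarith
        show "\<forall>e1\<in>?E. \<exists>f. degree f \<le> k - 1 \<and> (\<forall>j<n. 1 * \<alpha> j ^ e1 = (s j * w (\<sigma> j)) * poly f ((a \<circ> \<sigma>) j))"
        proof
          fix e1 assume e1: "e1 \<in> ?E"
          have "(\<lambda>j. if j < n then \<alpha> j ^ e1 else 0) \<in> ?M ` D"
            using word_in_C[OF e1, of n \<alpha>] CM by simp
          then obtain d where d: "d \<in> D" "(\<lambda>j. if j < n then \<alpha> j ^ e1 else 0) = ?M d" by blast
          then obtain f where f: "degree f \<le> k' - 1" "d = (\<lambda>j. if j < n then w j * poly f (a j) else 0)"
            unfolding kw(4) GRS_def by blast
          have "\<forall>j<n. 1 * \<alpha> j ^ e1 = (s j * w (\<sigma> j)) * poly f ((a \<circ> \<sigma>) j)"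
          proof (intro allI impI)
            fix j assume j: "j < n"
            show "1 * \<alpha> j ^ e1 = (s j * w (\<sigma> j)) * poly f ((a \<circ> \<sigma>) j)"
              using fun_cong[OF d(2), of j] j \<sigma>n[OF j] f(2) by simp
          qed
          moreover have "degree f \<le> k - 1" using f(1) kk by linarith
          ultimately show "\<exists>f. degree f \<le> k - 1 \<and> (\<forall>j<n. 1 * \<alpha> j ^ e1 = (s j * w (\<sigma> j)) * poly f ((a \<circ> \<sigma>) j))"
            by blast
        qed
      qed
    qed
  qed
  then show ?thesis unfolding non_GRS_MDS_def using assms(6) by blast
qed

end
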